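(* Consider the planted $k$-factor model with $k$ fixed and $p=\lambda/n$, where $\lambda=\lambda_n$ may depend on $n$, and condition on any realization of $H^*$. (i) If $\lambda=o(1)$, then with probability $1-o(1)$ the planted graph $H^*$ is the unique $k$-factor contained in $G$. (ii) If $\lambda=\Omega(1)$ (i.e. $\lambda_n\ge c_0>0$ for all large $n$), then there is a constant $c>0$ such that for all large $n$, with probability at least $c$ the graph $G$ contains a $k$-factor $H\neq H^*$.
   Context: Planted $k$-factor model: fix an integer $k\ge1$ and $n$ with $kn$ even. A $k$-factor on $[n]$ is a $k$-regular simple graph with vertex set $[n]$, identified with its edge set; $\mathcal H$ is the set of all $k$-factors on $[n]$. Let $p=\lambda/n\in[0,1]$. Draw $H^*$ uniformly at random from $\mathcal H$ and, independently, $G_0\sim\mathcal G(n,p)$ (each of the $\binom n2$ vertex pairs is an edge independently with probability $p$). The observed graph is $G=G_0\cup H^*$ (union of edge sets). A $k$-factor $H$ is "contained in $G$" if $H\subseteq E(G)$. Asymptotics are as $n\to\infty$ with $k$ fixed. *)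

theory Defs
  imports Complex_Main
begin

text \<open>Vertex set [n] is rendered as {0..<n}; an edge is a 2-element set {u,v}.
A graph on [n] is identified with its edge set.\<close>

definition vpairs :: "nat \<Rightarrow> nat set set" where
  "vpairs n = {e. \<exists>u v. u < n \<and> v < n \<and> u \<noteq> v \<and> e = {u, v}}"

definition is_kfactor :: "nat \<Rightarrow> nat \<Rightarrow> nat set set \<Rightarrow> bool" where
  "is_kfactor n k H \<longleftrightarrow> H \<subseteq> vpairs n \<and> (\<forall>v<n. card {e \<in> H. v \<in> e} = k)"

definition gnp_prob :: "nat \<Rightarrow> real \<Rightarrow> (nat set set \<Rightarrow> bool) \<Rightarrow> real" where
  "gnp_prob n p Q = (\<Sum>S\<in>Pow (vpairs n).
      if Q S then p ^ card S * (1 - p) ^ (card (vpairs n) - card S) else 0)"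

text \<open>Given the planted k-factor H, the probability (over G0 ~ G(n,p)) that
G = G0 \<union> H contains a k-factor different from H.\<close>
definition other_factor_prob :: "nat \<Rightarrow> nat \<Rightarrow> real \<Rightarrow> nat set set \<Rightarrow> real" where
  "other_factor_prob n k p H =
     gnp_prob n p (\<lambda>G0. \<exists>H'. is_kfactor n k H' \<and> H' \<noteq> H \<and> H' \<subseteq> G0 \<union> H)"

end

theory Submission
  imports Defs "HOL-Library.FuncSet"
begin

lemma finite_vpairs: "finite (vpairs n)"
proof -
  have "vpairs n \<subseteq> (\<lambda>(u,v). {u,v}) ` ({..<n} \<times> {..<n})"
    unfolding vpairs_def by auto
  thus ?thesis by (rule finite_subset) auto
qed

lemma binom_pow: "finite B \<Longrightarrow> (\<Sum>T\<in>Pow B. (p::real) ^ card T * q ^ (card B - card T)) = (p + q) ^ card B"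
proof (induction B rule: finite_induct)
  case empty thus ?case by simp
next
  case (insert b B)
  have pw: "Pow (insert b B) = Pow B \<union> insert b ` Pow B" by (rule Pow_insert)
  have disj: "Pow B \<inter> insert b ` Pow B = {}" using insert by auto
  have inj: "inj_on (insert b) (Pow B)" using insert unfolding inj_on_def by (metis Pow_iff insert_Diff_if insert_absorb insert_iff subsetD Diff_insert_absorb)
  have fin: "finite (Pow B)" using insert by simp
  have s1: "(\<Sum>T\<in>Pow B. p ^ card T * q ^ (card (insert b B) - card T)) = q * (p+q)^card B"
  proof -
    have "(\<Sum>T\<in>Pow B. p ^ card T * q ^ (card (insert b B) - card T)) = (\<Sum>T\<in>Pow B. q * (p ^ card T * q ^ (card B - card T)))"
    proof (rule sum.cong)
      fix T assume "T \<in> Pow B"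
      hence "card T \<le> card B" using insert by (simp add: card_mono)
      hence "card (insert b B) - card T = Suc (card B - card T)" using insert by simp
      thus "p ^ card T * q ^ (card (insert b B) - card T) = q * (p ^ card T * q ^ (card B - card T))" by simp
    qed simp
    also have "\<dots> = q * (p+q)^card B" by (simp only: sum_distrib_left[symmetric] insert.IH)
    finally show ?thesis .
  qed
  have s2: "(\<Sum>T\<in>insert b ` Pow B. p ^ card T * q ^ (card (insert b B) - card T)) = p * (p+q)^card B"
  proof -
    have "(\<Sum>T\<in>insert b ` Pow B. p ^ card T * q ^ (card (insert b B) - card T)) = (\<Sum>T\<in>Pow B. p ^ card (insert b T) * q ^ (card (insert b B) - card (insert b T)))"
      by (rule sum.reindex[OF inj, unfolded comp_def])
    also have "\<dots> = (\<Sum>T\<in>Pow B. p * (p ^ card T * q ^ (card B - card T)))"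
    proof (rule sum.cong)
      fix T assume T: "T \<in> Pow B"
      hence "b \<notin> T" "finite T" using insert by (auto intro: finite_subset)
      thus "p ^ card (insert b T) * q ^ (card (insert b B) - card (insert b T)) = p * (p ^ card T * q ^ (card B - card T))" using insert by simp
    qed simp
    also have "\<dots> = p * (p+q)^card B" by (simp only: sum_distrib_left[symmetric] insert.IH)
    finally show ?thesis .
  qed
  have "(\<Sum>T\<in>Pow (insert b B). p ^ card T * q ^ (card (insert b B) - card T)) =
     (\<Sum>T\<in>Pow B. p ^ card T * q ^ (card (insert b B) - card T)) + (\<Sum>T\<in>insert b ` Pow B. p ^ card T * q ^ (card (insert b B) - card T))"
    unfolding pw by (rule sum.union_disjoint) (use fin disj in auto)
  also have "\<dots> = (p+q) ^ card (insert b B)" using s1 s2 insert by (simp add: algebra_simps)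
  finally show ?case .
qed

definition wt :: "nat \<Rightarrow> real \<Rightarrow> nat set set \<Rightarrow> real" where
  "wt n p S = p ^ card S * (1 - p) ^ (card (vpairs n) - card S)"

definition Ew :: "nat \<Rightarrow> real \<Rightarrow> (nat set set \<Rightarrow> real) \<Rightarrow> real" where
  "Ew n p f = (\<Sum>S\<in>Pow (vpairs n). wt n p S * f S)"

lemma gnp_Ew: "gnp_prob n p Q = Ew n p (\<lambda>S. if Q S then 1 else 0)"
  unfolding gnp_prob_def Ew_def wt_def by (rule sum.cong) auto

lemma wt_nonneg: "0 \<le> p \<Longrightarrow> p \<le> 1 \<Longrightarrow> 0 \<le> wt n p S"
  unfolding wt_def by simp

lemma Ew_mono: "0 \<le> p \<Longrightarrow> p \<le> 1 \<Longrightarrow> (\<And>S. f S \<le> g S) \<Longrightarrow> Ew n p f \<le> Ew n p g"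
  unfolding Ew_def by (intro sum_mono mult_left_mono) (auto simp: wt_nonneg)

lemma Ew_sum: "Ew n p (\<lambda>S. \<Sum>i\<in>I. f i S) = (\<Sum>i\<in>I. Ew n p (f i))"
  unfolding Ew_def by (simp add: sum_distrib_left sum.swap[of _ I])

lemma Ew_diff: "Ew n p (\<lambda>S. f S - g S) = Ew n p f - Ew n p g"
  unfolding Ew_def by (simp add: algebra_simps sum_subtractf)

lemma Ew_cmult: "Ew n p (\<lambda>S. c * f S) = c * Ew n p f"
  unfolding Ew_def by (simp add: algebra_simps sum_distrib_left)

lemma gnp_mono: "0 \<le> p \<Longrightarrow> p \<le> 1 \<Longrightarrow> (\<And>S. Q S \<Longrightarrow> Q' S) \<Longrightarrow> gnp_prob n p Q \<le> gnp_prob n p Q'"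
  unfolding gnp_Ew by (rule Ew_mono) auto

lemma Ew_sub: assumes A: "A \<subseteq> vpairs n"
  shows "Ew n p (\<lambda>S. if A \<subseteq> S then 1 else 0) = p ^ card A"
proof -
  let ?V = "vpairs n"
  have finV: "finite ?V" by (rule finite_vpairs)
  have finA: "finite A" using A finV by (rule finite_subset)
  have "Ew n p (\<lambda>S. if A \<subseteq> S then 1 else 0) = (\<Sum>S\<in>{S\<in>Pow ?V. A \<subseteq> S}. wt n p S)"
    unfolding Ew_def by (simp add: sum.inter_filter[symmetric] finV if_distrib cong: if_cong)
  also have "{S\<in>Pow ?V. A \<subseteq> S} = (\<lambda>T. A \<union> T) ` Pow (?V - A)"
  proof
    show "{S\<in>Pow ?V. A \<subseteq> S} \<subseteq> (\<lambda>T. A \<union> T) ` Pow (?V - A)"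
    proof
      fix S assume "S \<in> {S\<in>Pow ?V. A \<subseteq> S}"
      hence "S = A \<union> (S - A)" "S - A \<in> Pow (?V - A)" by auto
      thus "S \<in> (\<lambda>T. A \<union> T) ` Pow (?V - A)" by blast
    qed
  qed (use A in auto)
  also have "(\<Sum>S\<in>(\<lambda>T. A \<union> T) ` Pow (?V - A). wt n p S) = (\<Sum>T\<in>Pow (?V - A). wt n p (A \<union> T))"
    by (rule sum.reindex[unfolded comp_def]) (auto simp: inj_on_def)
  also have "\<dots> = (\<Sum>T\<in>Pow (?V - A). p ^ card A * (p ^ card T * (1-p) ^ (card (?V - A) - card T)))"
  proof (rule sum.cong)
    fix T assume T: "T \<in> Pow (?V - A)"
    hence finT: "finite T" using finV by (auto intro: finite_subset)
    have cu: "card (A \<union> T) = card A + card T" using T finT finA by (subst card_Un_disjoint) auto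
    have cd: "card (?V - A) = card ?V - card A" using A finA by (simp add: card_Diff_subset)
    have "card T \<le> card (?V - A)" using T finV by (auto intro: card_mono)
    hence "card ?V - card (A \<union> T) = card (?V - A) - card T" using cu cd by simp
    thus "wt n p (A \<union> T) = p ^ card A * (p ^ card T * (1-p) ^ (card (?V - A) - card T))"
      unfolding wt_def using cu by (simp add: power_add)
  qed simp
  also have "\<dots> = p ^ card A" using binom_pow[of "?V - A" p "1-p"] finV
    by (simp add: sum_distrib_left[symmetric])
  finally show ?thesis .
qed

lemma gnp_sub: "A \<subseteq> vpairs n \<Longrightarrow> gnp_prob n p (\<lambda>S. A \<subseteq> S) = p ^ card A"
  unfolding gnp_Ew by (rule Ew_sub)

lemma union_bound:
  assumes "finite I" "0 \<le> p" "p \<le> 1"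
  shows "gnp_prob n p (\<lambda>S. \<exists>i\<in>I. Q i S) \<le> (\<Sum>i\<in>I. gnp_prob n p (Q i))"
proof -
  have "gnp_prob n p (\<lambda>S. \<exists>i\<in>I. Q i S) \<le> Ew n p (\<lambda>S. \<Sum>i\<in>I. if Q i S then 1 else 0)"
    unfolding gnp_Ew
  proof (rule Ew_mono[OF assms(2,3)])
    fix S
    show "(if \<exists>i\<in>I. Q i S then 1 else 0) \<le> (\<Sum>i\<in>I. if Q i S then 1 else (0::real))"
    proof (cases "\<exists>i\<in>I. Q i S")
      case True
      then obtain i where i: "i \<in> I" "Q i S" by blast
      have "(\<Sum>i\<in>{i}. if Q i S then 1 else (0::real)) \<le> (\<Sum>i\<in>I. if Q i S then 1 else (0::real))"
        by (rule sum_mono2) (use i assms in auto)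
      thus ?thesis using True i by simp
    qed (simp add: sum_nonneg)
  qed
  also have "\<dots> = (\<Sum>i\<in>I. gnp_prob n p (Q i))" unfolding Ew_sum gnp_Ew ..
  finally show ?thesis .
qed

definition oth :: "'a set \<Rightarrow> 'a \<Rightarrow> 'a" where "oth e a = the_elem (e - {a})"

lemma oth2: "a \<noteq> b \<Longrightarrow> oth {a,b} a = b"
proof -
  assume "a \<noteq> b"
  hence "{a,b} - {a} = {b}" by auto
  thus ?thesis unfolding oth_def by simp
qed

lemma cycle_exists:
  fixes D R :: "'a set set"
  assumes finD: "finite D" and finR: "finite R"
    and propD: "\<And>e. e \<in> D \<Longrightarrow> \<exists>a b. a \<noteq> b \<and> e = {a,b}"
    and propR: "\<And>e. e \<in> R \<Longrightarrow> \<exists>a b. a \<noteq> b \<and> e = {a,b}"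
    and bal: "\<And>v. card {e\<in>D. v \<in> e} = card {e\<in>R. v \<in> e}"
    and ne: "D \<noteq> {}"
  shows "\<exists>L s. L \<ge> 1 \<and> (\<forall>i. {fst (s i), snd (s i)} \<in> D) \<and> (\<forall>i. {snd (s i), fst (s (Suc i))} \<in> R)
     \<and> s L = s 0 \<and> inj_on (\<lambda>i. {fst (s i), snd (s i)}) {..<L}"
proof -
  define Dv where "Dv v = {e\<in>D. v \<in> e}" for v
  define Rv where "Rv v = {e\<in>R. v \<in> e}" for v
  have "\<forall>v. \<exists>h. bij_betw h (Dv v) (Rv v)"
  proof
    fix v show "\<exists>h. bij_betw h (Dv v) (Rv v)"
      by (rule finite_same_card_bij) (use finD finR bal in \<open>auto simp: Dv_def Rv_def\<close>)
  qed
  then obtain \<pi> where pi: "\<And>v. bij_betw (\<pi> v) (Dv v) (Rv v)" by metis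
  define sc where "sc = (\<lambda>(u,w). let r = \<pi> w {u,w}; x = oth r w; e' = inv_into (Dv x) (\<pi> x) r in (x, oth e' x))"
  define St where "St = {s. {fst s, snd s} \<in> D}"
  have neq: "u \<noteq> w" if "{u,w} \<in> D" for u w using propD[OF that] by (metis doubleton_eq_iff)
  have step: "\<exists>x y. sc (u,w) = (x,y) \<and> {x,y} \<in> D \<and> {w,x} \<in> R \<and> x \<noteq> w \<and> x \<noteq> y \<and>
      \<pi> w {u,w} = {w,x} \<and> \<pi> x {x,y} = {w,x}" if uw: "{u,w} \<in> D" for u w
  proof -
    define r where "r = \<pi> w {u,w}"
    have "{u,w} \<in> Dv w" using uw by (simp add: Dv_def)
    hence r: "r \<in> Rv w" unfolding r_def using pi[of w] by (auto simp: bij_betw_def)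
    have "r \<in> R" using r by (simp add: Rv_def)
    then obtain a b where ab: "a \<noteq> b" "r = {a,b}" using propR by blast
    define x where "x = oth r w"
    have "w = a \<or> w = b" using r ab by (simp add: Rv_def)
    hence rx: "r = {w,x} \<and> x \<noteq> w"
    proof
      assume "w = a" thus ?thesis using ab oth2[of a b] unfolding x_def by simp
    next
      assume "w = b" thus ?thesis using ab oth2[of b a] unfolding x_def by (simp add: insert_commute)
    qed
    have rR: "r \<in> R" using r by (simp add: Rv_def)
    have "r \<in> Rv x" using rx rR by (simp add: Rv_def)
    define e' where "e' = inv_into (Dv x) (\<pi> x) r"
    have e'D: "e' \<in> Dv x" and pe': "\<pi> x e' = r" unfolding e'_def using pi[of x] \<open>r \<in> Rv x\<close>
      by (auto simp: bij_betw_def inv_into_into f_inv_into_f)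
    have "e' \<in> D" using e'D by (simp add: Dv_def)
    then obtain c d where cd: "c \<noteq> d" "e' = {c,d}" using propD by blast
    define y where "y = oth e' x"
    have "x = c \<or> x = d" using e'D cd by (simp add: Dv_def)
    hence ey: "e' = {x,y} \<and> x \<noteq> y"
    proof
      assume "x = c" thus ?thesis using cd oth2[of c d] unfolding y_def by simp
    next
      assume "x = d" thus ?thesis using cd oth2[of d c] unfolding y_def by (simp add: insert_commute)
    qed
    have "sc (u,w) = (x,y)" by (simp add: sc_def Let_def r_def x_def e'_def y_def)
    thus ?thesis using ey rx rR e'D pe' r_def by (auto simp: Dv_def)
  qed
  have scSt: "sc s \<in> St" if "s \<in> St" for s
    using step[of "fst s" "snd s"] that by (auto simp: St_def)
  have scinj: "inj_on sc St"
  proof (rule inj_onI)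
    fix s s' assume s: "s \<in> St" and s': "s' \<in> St" and eq: "sc s = sc s'"
    obtain u w where [simp]: "s = (u,w)" by (cases s)
    obtain u' w' where [simp]: "s' = (u',w')" by (cases s')
    have uwD: "{u,w} \<in> D" and uwD': "{u',w'} \<in> D" using s s' by (auto simp: St_def)
    obtain x y where A: "sc (u,w) = (x,y)" "{x,y} \<in> D" "{w,x} \<in> R" "x \<noteq> w" "x \<noteq> y"
      "\<pi> w {u,w} = {w,x}" "\<pi> x {x,y} = {w,x}" using step[OF uwD] by blast
    obtain x' y' where B: "sc (u',w') = (x',y')" "{x',y'} \<in> D" "{w',x'} \<in> R" "x' \<noteq> w'" "x' \<noteq> y'"
      "\<pi> w' {u',w'} = {w',x'}" "\<pi> x' {x',y'} = {w',x'}" using step[OF uwD'] by blast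
    have xx: "x' = x" "y' = y" using A(1) B(1) eq by auto
    have "{w,x} = {w',x}" using A(7) B(7) xx by simp
    hence ww: "w' = w" using A(4) B(4) xx by (auto simp: doubleton_eq_iff)
    have "{u,w} \<in> Dv w" "{u',w} \<in> Dv w" using uwD uwD' ww by (auto simp: Dv_def)
    moreover have "\<pi> w {u,w} = \<pi> w {u',w}" using A(6) B(6) ww xx by simp
    ultimately have "{u,w} = {u',w}" using pi[of w] by (auto simp: bij_betw_def inj_on_def)
    hence "u = u'" using neq[OF uwD] neq[OF uwD'] ww by (auto simp: doubleton_eq_iff)
    thus "s = s'" using ww by simp
  qed
  have screv: "sc (prod.swap (sc s)) = prod.swap s" if "s \<in> St" for s
  proof -
    obtain u w where [simp]: "s = (u,w)" by (cases s)
    have uwD: "{u,w} \<in> D" using that by (auto simp: St_def)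
    obtain x y where A: "sc (u,w) = (x,y)" "{x,y} \<in> D" "{w,x} \<in> R" "x \<noteq> w" "x \<noteq> y"
      "\<pi> w {u,w} = {w,x}" "\<pi> x {x,y} = {w,x}" using step[OF uwD] by blast
    have "{u,w} \<in> Dv w" using uwD by (simp add: Dv_def)
    hence iv: "inv_into (Dv w) (\<pi> w) {w,x} = {u,w}" using A(6) pi[of w]
      by (metis bij_betw_def inv_into_f_f)
    have p1: "\<pi> x {y,x} = {w,x}" using A(7) by (simp add: insert_commute)
    have p2: "oth {w,x} x = w" using oth2[of x w] A(4) by (simp add: insert_commute)
    have p3: "oth {u,w} w = u" using oth2[of w u] neq[OF uwD] by (simp add: insert_commute)
    have "sc (y,x) = (w,u)" unfolding sc_def Let_def by (simp only: case_prod_conv p1 p2 iv p3)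
    thus ?thesis using A(1) by simp
  qed
  obtain e0 where "e0 \<in> D" using ne by blast
  then obtain a0 b0 where "a0 \<noteq> b0" "e0 = {a0,b0}" using propD by blast
  define s0 where "s0 = (a0,b0)"
  have s0St: "s0 \<in> St" using \<open>e0 \<in> D\<close> \<open>e0 = {a0,b0}\<close> by (simp add: St_def s0_def)
  define s where "s i = (sc ^^ i) s0" for i
  have sSt: "s i \<in> St" for i by (induction i) (auto simp: s_def s0St scSt)
  have sSuc: "s (Suc i) = sc (s i)" for i by (simp add: s_def)
  have finSt: "finite St"
  proof -
    have "St \<subseteq> (\<Union>D) \<times> (\<Union>D)" by (auto simp: St_def)
    moreover have "finite (\<Union>D)" using finD propD by (auto)
    ultimately show ?thesis by (meson finite_SigmaI finite_subset)
  qed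
  have cancel: "s (i + d) = s (j + d) \<Longrightarrow> s i = s j" for i j d
  proof (induction d)
    case (Suc d)
    hence "sc (s (i+d)) = sc (s (j+d))" by (simp add: sSuc)
    hence "s (i+d) = s (j+d)" using scinj sSt by (auto simp: inj_on_def)
    thus ?case using Suc by simp
  qed simp
  have "\<not> inj_on s {..card St}"
  proof
    assume "inj_on s {..card St}"
    hence "card (s ` {..card St}) = Suc (card St)" by (simp add: card_image)
    moreover have "s ` {..card St} \<subseteq> St" using sSt by auto
    hence "card (s ` {..card St}) \<le> card St" by (rule card_mono[OF finSt])
    ultimately show False by simp
  qed
  then obtain i j where ij: "i < j" "s i = s j" unfolding inj_on_def by (metis linorder_neqE_nat)
  hence "s 0 = s (j - i)" using cancel[of 0 i "j-i"] by simp
  hence exP: "\<exists>L. L \<ge> 1 \<and> s L = s 0" using ij by (intro exI[of _ "j-i"]) auto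
  define L where "L = (LEAST L. L \<ge> 1 \<and> s L = s 0)"
  have L: "L \<ge> 1" "s L = s 0" using LeastI_ex[OF exP] unfolding L_def by auto
  have Lmin: "\<not> (m \<ge> 1 \<and> s m = s 0)" if "m < L" for m using not_less_Least[OF that[unfolded L_def]] .
  have sdist: "s i \<noteq> s j" if "i < j" "j < L" for i j
  proof
    assume "s i = s j"
    hence "s 0 = s (j - i)" using cancel[of 0 i "j-i"] that by simp
    moreover have "j - i < L" "1 \<le> j - i" using that by auto
    ultimately show False using Lmin[of "j-i"] by metis
  qed
  have norev: "prod.swap (s a) \<noteq> s (a + d)" for a d
  proof (induction d arbitrary: a rule: less_induct)
    case (less d)
    show ?case
    proof (cases d)
      case 0
      have "{fst (s a), snd (s a)} \<in> D" using sSt[of a] by (simp add: St_def)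
      thus ?thesis using 0 neq by (cases "s a") auto
    next
      case (Suc d')
      show ?thesis
      proof (cases d')
        case 0
        obtain u w where sa: "s a = (u,w)" by (cases "s a")
        have uwD: "{u,w} \<in> D" using sSt[of a] sa by (simp add: St_def)
        obtain x y where A: "sc (u,w) = (x,y)" "x \<noteq> w" using step[OF uwD] by blast
        show ?thesis using A sa Suc 0 by (simp add: sSuc)
      next
        case (Suc d'')
        show ?thesis
        proof
          assume h: "prod.swap (s a) = s (a + d)"
          have "sc (prod.swap (s (Suc a))) = prod.swap (s a)" using screv[OF sSt[of a]] by (simp add: sSuc)
          also have "\<dots> = sc (s (Suc a + d''))" using h \<open>d = Suc d'\<close> Suc by (simp add: sSuc)
          finally have eq: "sc (prod.swap (s (Suc a))) = sc (s (Suc a + d''))" .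
          have "prod.swap (s (Suc a)) \<in> St" using sSt[of "Suc a"] by (simp add: St_def insert_commute)
          hence "prod.swap (s (Suc a)) = s (Suc a + d'')"
            using inj_onD[OF scinj eq] sSt[of "Suc a + d''"] by blast
          thus False using less.IH[of d'' "Suc a"] \<open>d = Suc d'\<close> Suc by simp
        qed
      qed
    qed
  qed
  have injL: "inj_on (\<lambda>i. {fst (s i), snd (s i)}) {..<L}"
  proof (rule inj_onI)
    fix i j assume i: "i \<in> {..<L}" and j: "j \<in> {..<L}" and eq: "{fst (s i), snd (s i)} = {fst (s j), snd (s j)}"
    show "i = j"
    proof (rule ccontr)
      assume "i \<noteq> j"
      hence ne: "s i \<noteq> s j" using sdist i j by (metis lessThan_iff linorder_neqE_nat)
      hence sw: "s j = prod.swap (s i)" using eq by (cases "s i"; cases "s j") (auto simp: doubleton_eq_iff)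
      show False
      proof (cases "i < j")
        case True thus False using norev[of i "j - i"] sw by simp
      next
        case False
        hence "j < i" using \<open>i \<noteq> j\<close> by simp
        moreover have "s i = prod.swap (s j)" using sw by simp
        ultimately show False using norev[of j "i - j"] by simp
      qed
    qed
  qed
  show ?thesis
  proof (intro exI conjI allI)
    show "1 \<le> L" by (rule L(1))
    show "s L = s 0" by (rule L(2))
    show "inj_on (\<lambda>i. {fst (s i), snd (s i)}) {..<L}" by (rule injL)
    fix i
    show "{fst (s i), snd (s i)} \<in> D" using sSt[of i] by (simp add: St_def)
    obtain u w where sa: "s i = (u,w)" by (cases "s i")
    have uwD: "{u,w} \<in> D" using sSt[of i] sa by (simp add: St_def)
    show "{snd (s i), fst (s (Suc i))} \<in> R" using step[OF uwD] sa by (auto simp: sSuc)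
  qed
qed

lemma vpairs_elem: "e \<in> vpairs n \<Longrightarrow> \<exists>a b. a \<noteq> b \<and> e = {a,b} \<and> a < n \<and> b < n"
  unfolding vpairs_def by blast

lemma card_vpairs_v_eq:
  assumes "is_kfactor n k H" "is_kfactor n k H'"
  shows "card {e\<in>H'. v \<in> e} = card {e\<in>H. v \<in> e}"
proof (cases "v < n")
  case True thus ?thesis using assms unfolding is_kfactor_def by simp
next
  case False
  have "\<forall>e\<in>H'. v \<notin> e" "\<forall>e\<in>H. v \<notin> e" using assms False unfolding is_kfactor_def
    by (auto dest!: vpairs_elem)
  hence e1: "{e\<in>H'. v \<in> e} = {}" and e2: "{e\<in>H. v \<in> e} = {}" by blast+
  show ?thesis unfolding e1 e2 by (rule refl)
qed

lemma kfactor_finite: "is_kfactor n k H \<Longrightarrow> finite H"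
  unfolding is_kfactor_def using finite_vpairs finite_subset by blast

lemma kfactor_sub_eq:
  assumes "is_kfactor n k H" "is_kfactor n k H'" "H' \<subseteq> H"
  shows "H' = H"
proof (rule ccontr)
  assume "H' \<noteq> H"
  then obtain e where e: "e \<in> H" "e \<notin> H'" using assms(3) by blast
  then obtain a b where ab: "e = {a,b}" "a < n" using assms(1) unfolding is_kfactor_def by (auto dest!: vpairs_elem)
  have "{x\<in>H'. a \<in> x} \<subset> {x\<in>H. a \<in> x}" using e ab assms(3) by auto
  hence "card {x\<in>H'. a \<in> x} < card {x\<in>H. a \<in> x}"
    by (rule psubset_card_mono[rotated]) (use kfactor_finite[OF assms(1)] in simp)
  thus False using card_vpairs_v_eq[OF assms(1,2)] by simp
qed

lemma balance:
  assumes "is_kfactor n k H" "is_kfactor n k H'"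
  shows "card {e\<in>H'-H. v \<in> e} = card {e\<in>H-H'. v \<in> e}"
proof -
  have f: "finite H" "finite H'" using assms kfactor_finite by auto
  have u1: "{e\<in>H'. v \<in> e} = {e\<in>H'-H. v \<in> e} \<union> {e\<in>H'\<inter>H. v \<in> e}" by auto
  have c1: "card {e\<in>H'. v \<in> e} = card {e\<in>H'-H. v \<in> e} + card {e\<in>H'\<inter>H. v \<in> e}"
    unfolding u1 by (rule card_Un_disjoint) (use f in auto)
  have u2: "{e\<in>H. v \<in> e} = {e\<in>H-H'. v \<in> e} \<union> {e\<in>H'\<inter>H. v \<in> e}" by auto
  have c2: "card {e\<in>H. v \<in> e} = card {e\<in>H-H'. v \<in> e} + card {e\<in>H'\<inter>H. v \<in> e}"
    unfolding u2 by (rule card_Un_disjoint) (use f in auto)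
  show ?thesis using c1 c2 card_vpairs_v_eq[OF assms] by simp
qed

lemma ordH_card:
  assumes H: "is_kfactor n k H"
  shows "finite {(a,b). {a,b} \<in> H}" "card {(a,b). {a,b} \<in> H} \<le> n * k"
proof -
  have eq: "{(a,b). {a,b} \<in> H} = Sigma {..<n} (\<lambda>a. {b. {a,b} \<in> H})"
    using H unfolding is_kfactor_def by (auto dest!: vpairs_elem simp: doubleton_eq_iff)
  have cb: "card {b. {a,b} \<in> H} = k" if a: "a < n" for a
  proof -
    have "bij_betw (\<lambda>b. {a,b}) {b. {a,b} \<in> H} {e\<in>H. a \<in> e}"
    proof (rule bij_betwI')
      show "\<And>x y. x \<in> {b. {a, b} \<in> H} \<Longrightarrow> y \<in> {b. {a, b} \<in> H} \<Longrightarrow> ({a, x} = {a, y}) = (x = y)"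
        by (auto simp: doubleton_eq_iff)
      show "\<And>x. x \<in> {b. {a, b} \<in> H} \<Longrightarrow> {a, x} \<in> {e \<in> H. a \<in> e}" by auto
      fix y assume "y \<in> {e \<in> H. a \<in> e}"
      then obtain u v where "y = {u,v}" "y \<in> H" "a \<in> y" using H unfolding is_kfactor_def by (auto dest!: vpairs_elem)
      thus "\<exists>x\<in>{b. {a, b} \<in> H}. y = {a, x}" by (auto simp: insert_commute)
    qed
    hence "card {b. {a,b} \<in> H} = card {e\<in>H. a \<in> e}" by (rule bij_betw_same_card)
    thus ?thesis using H a unfolding is_kfactor_def by simp
  qed
  have fb: "finite {b. {a,b} \<in> H}" if a: "a < n" for a
  proof -
    have "{b. {a,b} \<in> H} \<subseteq> {..<n}" using H unfolding is_kfactor_def by (auto dest!: vpairs_elem simp: doubleton_eq_iff)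
    thus ?thesis by (rule finite_subset) simp
  qed
  show "finite {(a,b). {a,b} \<in> H}" unfolding eq using fb by auto
  have "card (Sigma {..<n} (\<lambda>a. {b. {a,b} \<in> H})) = (\<Sum>a<n. card {b. {a,b} \<in> H})"
    by (rule card_SigmaI) (use fb in auto)
  also have "\<dots> = n * k" using cb by simp
  finally show "card {(a,b). {a,b} \<in> H} \<le> n * k" unfolding eq by simp
qed

lemma partI_bound:
  assumes H: "is_kfactor n k H" and p: "0 \<le> p" "p \<le> 1"
  shows "other_factor_prob n k p H \<le> (\<Sum>m=1..card (vpairs n). (real (n*k) * p)^m)"
proof -
  define M where "M = card (vpairs n)"
  define OH where "OH = {(a,b). {a,b} \<in> H}"
  define Ds where "Ds m f = (\<lambda>i. {snd (f i), fst (f (Suc i mod m))}) ` {..<m}" for m and f :: "nat \<Rightarrow> nat \<times> nat"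
  define F where "F m = {f \<in> {..<m} \<rightarrow>\<^sub>E OH. Ds m f \<subseteq> vpairs n \<and> card (Ds m f) = m}" for m
  have finOH: "finite OH" and cOH: "card OH \<le> n * k" using ordH_card[OF H] by (auto simp: OH_def)
  have finF: "finite (F m)" for m unfolding F_def using finOH by (intro finite_subset[OF _ finite_PiE[of "{..<m}" "\<lambda>_. OH"]]) auto
  have cF: "card (F m) \<le> (n*k)^m" for m
  proof -
    have "card (F m) \<le> card ({..<m} \<rightarrow>\<^sub>E OH)" unfolding F_def
      by (rule card_mono) (use finOH in \<open>auto intro: finite_PiE\<close>)
    also have "\<dots> = card OH ^ m" by (simp add: card_PiE)
    also have "\<dots> \<le> (n*k)^m" using cOH by (rule power_mono) simp
    finally show ?thesis .
  qed
  have Hfin: "finite H" using H by (rule kfactor_finite)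
  have key: "\<exists>m\<in>{1..M}. \<exists>f\<in>F m. Ds m f \<subseteq> S"
    if ex: "\<exists>H'. is_kfactor n k H' \<and> H' \<noteq> H \<and> H' \<subseteq> S \<union> H" for S
  proof -
    obtain H' where H': "is_kfactor n k H'" "H' \<noteq> H" "H' \<subseteq> S \<union> H" using ex by blast
    define D where "D = H' - H"
    define R where "R = H - H'"
    have Vs: "H \<subseteq> vpairs n" "H' \<subseteq> vpairs n" using H H' unfolding is_kfactor_def by auto
    have "D \<noteq> {}"
    proof
      assume "D = {}"
      hence "H' \<subseteq> H" by (auto simp: D_def)
      thus False using kfactor_sub_eq[OF H H'(1)] H'(2) by simp
    qed
    have propDR: "\<exists>a b. a \<noteq> b \<and> e = {a,b}" if "e \<in> D \<union> R" for e
    proof -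
      have "e \<in> vpairs n" using that Vs unfolding D_def R_def by auto
      thus ?thesis using vpairs_elem by blast
    qed
    obtain L s where Ls: "L \<ge> 1" "\<forall>i. {fst (s i), snd (s i)} \<in> D" "\<forall>i. {snd (s i), fst (s (Suc i))} \<in> R"
      "s L = s 0" "inj_on (\<lambda>i. {fst (s i), snd (s i)}) {..<L}"
      using cycle_exists[of D R] kfactor_finite[OF H'(1)] Hfin propDR balance[OF H H'(1)] \<open>D \<noteq> {}\<close>
      unfolding D_def R_def by auto
    define f where "f i = (if i < L then (snd (s i), fst (s (Suc i))) else undefined)" for i
    have sL: "s (Suc i mod L) = s (Suc i)" if "i < L" for i
    proof (cases "Suc i < L")
      case True thus ?thesis by simp
    next
      case False hence "Suc i = L" using that by simp
      thus ?thesis using Ls(4) by simp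
    qed
    have Dseq: "Ds L f = (\<lambda>j. {fst (s j), snd (s j)}) ` {..<L}"
    proof
      show "Ds L f \<subseteq> (\<lambda>j. {fst (s j), snd (s j)}) ` {..<L}"
      proof
        fix x assume "x \<in> Ds L f"
        then obtain i where i: "i < L" "x = {snd (f i), fst (f (Suc i mod L))}" unfolding Ds_def by auto
        have "Suc i mod L < L" using Ls(1) by simp
        hence "x = {fst (s (Suc i mod L)), snd (s (Suc i mod L))}" using i sL[OF i(1)] by (simp add: f_def)
        thus "x \<in> (\<lambda>j. {fst (s j), snd (s j)}) ` {..<L}" using \<open>Suc i mod L < L\<close> by blast
      qed
    next
      show "(\<lambda>j. {fst (s j), snd (s j)}) ` {..<L} \<subseteq> Ds L f"
      proof
        fix x assume "x \<in> (\<lambda>j. {fst (s j), snd (s j)}) ` {..<L}"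
        then obtain j where j: "j < L" "x = {fst (s j), snd (s j)}" by auto
        define i where "i = (if j = 0 then L - 1 else j - 1)"
        have i: "i < L" "Suc i mod L = j" using j Ls(1) unfolding i_def by auto
        have "x = {snd (f i), fst (f (Suc i mod L))}" using i j sL[OF i(1)] by (simp add: f_def)
        thus "x \<in> Ds L f" using i unfolding Ds_def by blast
      qed
    qed
    have cD: "card (Ds L f) = L" unfolding Dseq using Ls(5) by (simp add: card_image)
    have DsD: "Ds L f \<subseteq> D" unfolding Dseq using Ls(2) by auto
    have DV: "D \<subseteq> vpairs n" using Vs unfolding D_def by auto
    have DS: "D \<subseteq> S" using H'(3) unfolding D_def by auto
    have fF: "f \<in> F L"
      unfolding F_def
    proof (intro CollectI conjI)
      show "f \<in> {..<L} \<rightarrow>\<^sub>E OH" using Ls(3) unfolding f_def OH_def R_def by (auto split: if_splits)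
      show "Ds L f \<subseteq> vpairs n" using DsD DV by auto
      show "card (Ds L f) = L" by (rule cD)
    qed
    have "L \<le> M" unfolding M_def using DsD DV cD card_mono[OF finite_vpairs, of "Ds L f" n] by auto
    thus ?thesis using fF DsD DS Ls(1) by (intro bexI[of _ L]) auto
  qed
  have "other_factor_prob n k p H \<le> gnp_prob n p (\<lambda>S. \<exists>m\<in>{1..M}. \<exists>f\<in>F m. Ds m f \<subseteq> S)"
    unfolding other_factor_prob_def by (rule gnp_mono[OF p]) (use key in blast)
  also have "\<dots> \<le> (\<Sum>m\<in>{1..M}. gnp_prob n p (\<lambda>S. \<exists>f\<in>F m. Ds m f \<subseteq> S))"
    by (rule union_bound) (use p in auto)
  also have "\<dots> \<le> (\<Sum>m\<in>{1..M}. (\<Sum>f\<in>F m. gnp_prob n p (\<lambda>S. Ds m f \<subseteq> S)))"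
    by (rule sum_mono, rule union_bound) (use p finF in auto)
  also have "\<dots> = (\<Sum>m\<in>{1..M}. (\<Sum>f\<in>F m. p ^ m))"
  proof (rule sum.cong[OF refl], rule sum.cong[OF refl])
    fix m f assume "f \<in> F m"
    thus "gnp_prob n p (\<lambda>S. Ds m f \<subseteq> S) = p ^ m" unfolding F_def by (auto simp: gnp_sub)
  qed
  also have "\<dots> = (\<Sum>m\<in>{1..M}. real (card (F m)) * p ^ m)" by simp
  also have "\<dots> \<le> (\<Sum>m\<in>{1..M}. real ((n*k)^m) * p ^ m)"
  proof (intro sum_mono mult_right_mono)
    fix m show "real (card (F m)) \<le> real ((n*k)^m)" using cF[of m] by (simp only: of_nat_le_iff)
  qed (use p in auto)
  also have "\<dots> = (\<Sum>m=1..card (vpairs n). (real (n*k) * p)^m)"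
    unfolding M_def by (simp add: power_mult_distrib)
  finally show ?thesis .
qed

lemma sum_ind_card: "finite A \<Longrightarrow> (\<Sum>x\<in>A. if P x then 1 else (0::real)) = real (card {x\<in>A. P x})"
  by (simp add: sum.inter_filter[symmetric])

lemma bonf:
  assumes I: "finite I" and p: "0 \<le> p" "p \<le> 1"
    and A: "\<And>i. i \<in> I \<Longrightarrow> A i \<subseteq> vpairs n \<and> card (A i) = 2"
    and dj: "\<And>i j. i \<in> I \<Longrightarrow> j \<in> I \<Longrightarrow> i \<noteq> j \<Longrightarrow> A i \<inter> A j = {}"
  shows "gnp_prob n p (\<lambda>S. \<exists>i\<in>I. A i \<subseteq> S) \<ge> real (card I) * p^2 - (real (card I) * real (card I) - real (card I)) * p^4 / 2"
proof -
  define Off where "Off = (I \<times> I) - (\<lambda>i. (i,i)) ` I"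
  have finOff: "finite Off" using I by (simp add: Off_def)
  have cOff: "card Off = card I * card I - card I"
  proof -
    have "card ((\<lambda>i. (i,i)) ` I) = card I" by (rule card_image) (auto simp: inj_on_def)
    moreover have "(\<lambda>i. (i,i)) ` I \<subseteq> I \<times> I" by auto
    ultimately show ?thesis unfolding Off_def using I by (simp add: card_Diff_subset card_cartesian_product)
  qed
  have cOff': "real (card Off) = real (card I) * real (card I) - real (card I)"
  proof -
    have "card I \<le> card I * card I" by (cases "card I") auto
    thus ?thesis using cOff by (simp add: of_nat_diff)
  qed
  have pw: "(\<Sum>i\<in>I. if A i \<subseteq> S then 1 else 0) - (\<Sum>q\<in>Off. if A (fst q) \<union> A (snd q) \<subseteq> S then 1 else 0) / 2
      \<le> (if \<exists>i\<in>I. A i \<subseteq> S then 1 else (0::real))" for S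
  proof -
    define J where "J = {i\<in>I. A i \<subseteq> S}"
    have finJ: "finite J" using I by (simp add: J_def)
    have s1: "(\<Sum>i\<in>I. if A i \<subseteq> S then 1 else (0::real)) = real (card J)"
      unfolding J_def using I by (rule sum_ind_card)
    have "{q\<in>Off. A (fst q) \<union> A (snd q) \<subseteq> S} = (J \<times> J) - (\<lambda>i. (i,i)) ` J"
      unfolding Off_def J_def by auto
    hence c2: "card {q\<in>Off. A (fst q) \<union> A (snd q) \<subseteq> S} = card J * card J - card J"
    proof -
      assume e: "{q\<in>Off. A (fst q) \<union> A (snd q) \<subseteq> S} = (J \<times> J) - (\<lambda>i. (i,i)) ` J"
      have "card ((\<lambda>i. (i,i)) ` J) = card J" by (rule card_image) (auto simp: inj_on_def)
      moreover have "(\<lambda>i. (i,i)) ` J \<subseteq> J \<times> J" by auto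
      ultimately show ?thesis unfolding e using finJ by (simp add: card_Diff_subset card_cartesian_product)
    qed
    have s2: "(\<Sum>q\<in>Off. if A (fst q) \<union> A (snd q) \<subseteq> S then 1 else (0::real)) = real (card J) * real (card J) - real (card J)"
    proof -
      have "card J \<le> card J * card J" by (cases "card J") auto
      thus ?thesis using sum_ind_card[OF finOff, of "\<lambda>q. A (fst q) \<union> A (snd q) \<subseteq> S"] c2 by (simp add: of_nat_diff)
    qed
    show ?thesis
    proof (cases "J = {}")
      case True thus ?thesis using s1 s2 by simp
    next
      case False
      hence "\<exists>i\<in>I. A i \<subseteq> S" unfolding J_def by auto
      moreover have "card J \<ge> 1" using False finJ by (simp add: Suc_le_eq card_gt_0_iff)
      moreover have "real (card J) - real (card J) * real (card J) / 2 + real (card J) / 2 \<le> 1"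
      proof (cases "card J = 1")
        case True thus ?thesis by simp
      next
        case False
        hence "real (card J) \<ge> 2" using \<open>card J \<ge> 1\<close> by simp
        hence "0 \<le> (real (card J) - 1) * (real (card J) - 2)" by (intro mult_nonneg_nonneg) auto
        thus ?thesis by (simp add: algebra_simps)
      qed
      ultimately show ?thesis unfolding s1 s2 by (simp add: diff_divide_distrib)
    qed
  qed
  have "gnp_prob n p (\<lambda>S. \<exists>i\<in>I. A i \<subseteq> S) \<ge>
     Ew n p (\<lambda>S. (\<Sum>i\<in>I. if A i \<subseteq> S then 1 else 0) - (\<Sum>q\<in>Off. if A (fst q) \<union> A (snd q) \<subseteq> S then 1 else 0) / 2)"
    unfolding gnp_Ew by (rule Ew_mono[OF p]) (rule pw)
  also have "Ew n p (\<lambda>S. (\<Sum>i\<in>I. if A i \<subseteq> S then 1 else 0) - (\<Sum>q\<in>Off. if A (fst q) \<union> A (snd q) \<subseteq> S then 1 else 0) / 2)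
     = (\<Sum>i\<in>I. Ew n p (\<lambda>S. if A i \<subseteq> S then 1 else 0)) - (\<Sum>q\<in>Off. Ew n p (\<lambda>S. if A (fst q) \<union> A (snd q) \<subseteq> S then 1 else 0)) / 2"
    by (simp only: Ew_diff Ew_sum divide_inverse mult.commute[of _ "inverse 2"] Ew_cmult)
  also have "(\<Sum>i\<in>I. Ew n p (\<lambda>S. if A i \<subseteq> S then 1 else 0)) = (\<Sum>i\<in>I. p^2)"
    by (rule sum.cong) (use A in \<open>auto simp: Ew_sub\<close>)
  also have "(\<Sum>q\<in>Off. Ew n p (\<lambda>S. if A (fst q) \<union> A (snd q) \<subseteq> S then 1 else 0)) = (\<Sum>q\<in>Off. p^4)"
  proof (rule sum.cong[OF refl])
    fix q assume q: "q \<in> Off"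
    hence q': "fst q \<in> I" "snd q \<in> I" "fst q \<noteq> snd q" unfolding Off_def by auto
    have fin: "finite (A (fst q))" "finite (A (snd q))" using A q' by (auto intro: card_ge_0_finite)
    have "card (A (fst q) \<union> A (snd q)) = 4" using card_Un_disjoint[OF fin dj[OF q']] A q' by simp
    thus "Ew n p (\<lambda>S. if A (fst q) \<union> A (snd q) \<subseteq> S then 1 else 0) = p^4" using A q' by (subst Ew_sub) auto
  qed
  finally show ?thesis using cOff' by simp
qed

lemma greedy:
  fixes C :: "'a \<Rightarrow> 'a set"
  assumes "finite X" and sym: "\<And>x y. y \<in> C x \<Longrightarrow> x \<in> C y"
    and cC: "\<And>x. card (C x \<inter> X) \<le> d" and self: "\<And>x. x \<in> C x"
  shows "\<exists>Y\<subseteq>X. card X \<le> d * card Y \<and> (\<forall>x\<in>Y. \<forall>y\<in>Y. x \<noteq> y \<longrightarrow> y \<notin> C x)"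
  using assms(1) cC
proof (induction "card X" arbitrary: X rule: less_induct)
  case less
  show ?case
  proof (cases "X = {}")
    case True thus ?thesis by auto
  next
    case False
    then obtain x where x: "x \<in> X" by blast
    define X' where "X' = X - C x"
    have finX': "finite X'" using less.prems by (simp add: X'_def)
    have "X' \<subset> X" using x self[of x] unfolding X'_def by auto
    hence lt: "card X' < card X" using less.prems by (simp add: psubset_card_mono)
    have "card (C z \<inter> X') \<le> d" for z
    proof -
      have "card (C z \<inter> X') \<le> card (C z \<inter> X)" by (rule card_mono) (use less.prems(1) in \<open>auto simp: X'_def\<close>)
      thus ?thesis using less.prems(2)[of z] by linarith
    qed
    then obtain Y' where Y': "Y' \<subseteq> X'" "card X' \<le> d * card Y'" "\<forall>x\<in>Y'. \<forall>y\<in>Y'. x \<noteq> y \<longrightarrow> y \<notin> C x"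
      using less.hyps[OF lt finX'] by blast
    define Y where "Y = insert x Y'"
    have xY': "x \<notin> Y'" using Y'(1) self[of x] unfolding X'_def by auto
    have finY': "finite Y'" using Y'(1) finX' by (rule finite_subset)
    have "X = X' \<union> (C x \<inter> X)" unfolding X'_def by auto
    hence "card X \<le> card X' + card (C x \<inter> X)" by (metis card_Un_le)
    also have "\<dots> \<le> d * card Y' + d" using Y'(2) less.prems(2)[of x] by simp
    also have "\<dots> = d * card Y" unfolding Y_def using xY' finY' by simp
    finally have c: "card X \<le> d * card Y" .
    have "\<forall>a\<in>Y. \<forall>b\<in>Y. a \<noteq> b \<longrightarrow> b \<notin> C a"
      unfolding Y_def using Y' sym unfolding X'_def by blast
    moreover have "Y \<subseteq> X" unfolding Y_def using x Y'(1) unfolding X'_def by auto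
    ultimately show ?thesis using c by blast
  qed
qed

lemma deg_a:
  assumes fin: "finite H" and ab: "{a,b} \<in> H" and cd: "{c,d} \<in> H"
    and dist: "a \<noteq> b" "a \<noteq> c" "a \<noteq> d" and ac: "{a,c} \<notin> H"
  shows "card {e \<in> (H - {{a,b},{c,d}}) \<union> {{a,c},{b,d}}. a \<in> e} = card {e\<in>H. a \<in> e}"
proof -
  have eq: "{e \<in> (H - {{a,b},{c,d}}) \<union> {{a,c},{b,d}}. a \<in> e} = insert {a,c} ({e\<in>H. a \<in> e} - {{a,b}})"
    using dist by auto
  have f: "finite {e\<in>H. a \<in> e}" using fin by simp
  have "{a,c} \<notin> {e\<in>H. a \<in> e} - {{a,b}}" using ac by simp
  hence "card (insert {a,c} ({e\<in>H. a \<in> e} - {{a,b}})) = Suc (card ({e\<in>H. a \<in> e} - {{a,b}}))"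
    using f by simp
  also have "\<dots> = card {e\<in>H. a \<in> e}" using ab f
    by (simp add: card_Diff_singleton) (metis card_0_eq empty_iff f mem_Collect_eq Suc_pred insertI1 not_gr0)
  finally show ?thesis unfolding eq .
qed

lemma switch_kfactor:
  assumes H: "is_kfactor n k H" and ab: "{a,b} \<in> H" and cd: "{c,d} \<in> H"
    and dist: "a \<noteq> b" "a \<noteq> c" "a \<noteq> d" "b \<noteq> c" "b \<noteq> d" "c \<noteq> d"
    and ac: "{a,c} \<notin> H" and bd: "{b,d} \<notin> H"
  shows "is_kfactor n k ((H - {{a,b},{c,d}}) \<union> {{a,c},{b,d}})"
proof -
  let ?H' = "(H - {{a,b},{c,d}}) \<union> {{a,c},{b,d}}"
  have fin: "finite H" using H by (rule kfactor_finite)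
  have V: "H \<subseteq> vpairs n" and deg: "\<forall>v<n. card {e\<in>H. v \<in> e} = k" using H unfolding is_kfactor_def by auto
  have lt: "a < n" "b < n" "c < n" "d < n" using ab cd V unfolding vpairs_def by (auto simp: doubleton_eq_iff)
  have "{a,c} \<in> vpairs n" "{b,d} \<in> vpairs n" using lt dist unfolding vpairs_def by blast+
  hence sub: "?H' \<subseteq> vpairs n" using V by auto
  have da: "card {e \<in> ?H'. a \<in> e} = card {e\<in>H. a \<in> e}" by (rule deg_a[OF fin ab cd]) (use dist ac in auto)
  have "card {e \<in> (H - {{b,a},{d,c}}) \<union> {{b,d},{a,c}}. b \<in> e} = card {e\<in>H. b \<in> e}"
    by (rule deg_a[OF fin]) (use dist bd ab cd in \<open>auto simp: insert_commute\<close>)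
  hence db: "card {e \<in> ?H'. b \<in> e} = card {e\<in>H. b \<in> e}" by (simp add: insert_commute)
  have "card {e \<in> (H - {{c,d},{a,b}}) \<union> {{c,a},{d,b}}. c \<in> e} = card {e\<in>H. c \<in> e}"
    by (rule deg_a[OF fin]) (use dist ac ab cd in \<open>auto simp: insert_commute\<close>)
  hence dc: "card {e \<in> ?H'. c \<in> e} = card {e\<in>H. c \<in> e}" by (simp add: insert_commute)
  have "card {e \<in> (H - {{d,c},{b,a}}) \<union> {{d,b},{c,a}}. d \<in> e} = card {e\<in>H. d \<in> e}"
    by (rule deg_a[OF fin]) (use dist bd ab cd in \<open>auto simp: insert_commute\<close>)
  hence dd: "card {e \<in> ?H'. d \<in> e} = card {e\<in>H. d \<in> e}" by (simp add: insert_commute)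
  have "card {e \<in> ?H'. v \<in> e} = k" if v: "v < n" for v
  proof -
    consider "v = a" | "v = b" | "v = c" | "v = d" | "v \<notin> {a,b,c,d}" by blast
    thus ?thesis
    proof cases
      case 5
      hence "{e \<in> ?H'. v \<in> e} = {e\<in>H. v \<in> e}" by auto
      thus ?thesis using deg v by simp
    qed (use da db dc dd deg v in auto)
  qed
  thus ?thesis unfolding is_kfactor_def using sub by blast
qed

lemma nbr_card:
  assumes H: "is_kfactor n k H"
  shows "finite {b. {a,b} \<in> H}" "card {b. {a,b} \<in> H} \<le> k" "a < n \<Longrightarrow> card {b. {a,b} \<in> H} = k"
proof -
  have sub: "{b. {a,b} \<in> H} \<subseteq> {..<n}" using H unfolding is_kfactor_def by (auto dest!: vpairs_elem simp: doubleton_eq_iff)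
  thus fb: "finite {b. {a,b} \<in> H}" by (rule finite_subset) simp
  have bij: "bij_betw (\<lambda>b. {a,b}) {b. {a,b} \<in> H} {e\<in>H. a \<in> e}"
  proof (rule bij_betwI')
    show "\<And>x y. x \<in> {b. {a, b} \<in> H} \<Longrightarrow> y \<in> {b. {a, b} \<in> H} \<Longrightarrow> ({a, x} = {a, y}) = (x = y)"
      by (auto simp: doubleton_eq_iff)
    show "\<And>x. x \<in> {b. {a, b} \<in> H} \<Longrightarrow> {a, x} \<in> {e \<in> H. a \<in> e}" by auto
    fix y assume "y \<in> {e \<in> H. a \<in> e}"
    then obtain u v where "y = {u,v}" "y \<in> H" "a \<in> y" using H unfolding is_kfactor_def by (auto dest!: vpairs_elem)
    thus "\<exists>x\<in>{b. {a, b} \<in> H}. y = {a, x}" by (auto simp: insert_commute)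
  qed
  hence ce: "card {b. {a,b} \<in> H} = card {e\<in>H. a \<in> e}" by (rule bij_betw_same_card)
  show "a < n \<Longrightarrow> card {b. {a,b} \<in> H} = k" using ce H unfolding is_kfactor_def by simp
  show "card {b. {a,b} \<in> H} \<le> k"
  proof (cases "a < n")
    case True thus ?thesis using ce H unfolding is_kfactor_def by simp
  next
    case False
    have "\<forall>b. {a,b} \<notin> H"
    proof (intro allI notI)
      fix b assume "{a,b} \<in> H"
      then obtain u v where "{a,b} = {u,v}" "u < n" "v < n" using H unfolding is_kfactor_def by (auto dest!: vpairs_elem)
      thus False using False by (auto simp: doubleton_eq_iff)
    qed
    hence e: "{b. {a,b} \<in> H} = {}" by blast
    show ?thesis unfolding e by simp
  qed
qed

definition Nb :: "nat set set \<Rightarrow> nat set \<Rightarrow> nat set" where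
  "Nb H S = S \<union> (\<Union>u\<in>S. {b. {u,b} \<in> H})"

lemma Nb_card:
  assumes H: "is_kfactor n k H" and S: "finite S"
  shows "finite (Nb H S)" "card (Nb H S) \<le> (k+1) * card S"
proof -
  show "finite (Nb H S)" unfolding Nb_def by (intro finite_UnI finite_UN_I S nbr_card(1)[OF H])
  have "card (Nb H S) \<le> card S + card (\<Union>u\<in>S. {b. {u,b} \<in> H})" unfolding Nb_def by (rule card_Un_le)
  also have "card (\<Union>u\<in>S. {b. {u,b} \<in> H}) \<le> (\<Sum>u\<in>S. card {b. {u,b} \<in> H})" using S by (rule card_UN_le)
  also have "\<dots> \<le> (\<Sum>u\<in>S. k)" by (rule sum_mono) (rule nbr_card(2)[OF H])
  finally show "card (Nb H S) \<le> (k+1) * card S" by (simp add: mult.commute)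
qed

definition Bl :: "nat set set \<Rightarrow> nat \<Rightarrow> nat set" where
  "Bl H x = {y. \<exists>a b. (a = x \<or> {x,a} \<in> H) \<and> (b = a \<or> {a,b} \<in> H) \<and> (y = b \<or> {b,y} \<in> H)}"

lemma Bl_sym: "y \<in> Bl H x \<Longrightarrow> x \<in> Bl H y"
proof -
  assume "y \<in> Bl H x"
  then obtain a b where ab: "a = x \<or> {x,a} \<in> H" "b = a \<or> {a,b} \<in> H" "y = b \<or> {b,y} \<in> H"
    unfolding Bl_def by blast
  have "b = y \<or> {y,b} \<in> H" using ab(3) by (metis insert_commute)
  moreover have "a = b \<or> {b,a} \<in> H" using ab(2) by (metis insert_commute)
  moreover have "x = a \<or> {a,x} \<in> H" using ab(1) by (metis insert_commute)
  ultimately show ?thesis unfolding Bl_def by blast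
qed

lemma Bl_card:
  assumes H: "is_kfactor n k H"
  shows "card (Bl H x) \<le> (k+1)^3" "finite (Bl H x)"
proof -
  have sub: "Bl H x \<subseteq> Nb H (Nb H (Nb H {x}))"
  proof
    fix y assume "y \<in> Bl H x"
    then obtain a b where ab: "a = x \<or> {x,a} \<in> H" "b = a \<or> {a,b} \<in> H" "y = b \<or> {b,y} \<in> H"
      unfolding Bl_def by blast
    have "a \<in> Nb H {x}" using ab(1) unfolding Nb_def by auto
    hence "b \<in> Nb H (Nb H {x})" using ab(2) unfolding Nb_def by auto
    thus "y \<in> Nb H (Nb H (Nb H {x}))" using ab(3) unfolding Nb_def by auto
  qed
  have f1: "finite (Nb H {x})" "card (Nb H {x}) \<le> (k+1)" using Nb_card[OF H, of "{x}"] by auto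
  have f2: "finite (Nb H (Nb H {x}))" "card (Nb H (Nb H {x})) \<le> (k+1)*(k+1)"
    using Nb_card[OF H f1(1)] order_trans[OF Nb_card(2)[OF H f1(1)] mult_le_mono2[OF f1(2)]] by auto
  have f3: "finite (Nb H (Nb H (Nb H {x})))" "card (Nb H (Nb H (Nb H {x}))) \<le> (k+1)*((k+1)*(k+1))"
    using Nb_card[OF H f2(1)] order_trans[OF Nb_card(2)[OF H f2(1)] mult_le_mono2[OF f2(2)]] by auto
  show "finite (Bl H x)" using finite_subset[OF sub f3(1)] .
  have "card (Bl H x) \<le> (k+1)*((k+1)*(k+1))" using card_mono[OF f3(1) sub] f3(2) by linarith
  thus "card (Bl H x) \<le> (k+1)^3" by (simp only: power3_eq_cube)
qed

lemma floor_half: "(y::real) \<ge> 1 \<Longrightarrow> real (nat \<lfloor>y\<rfloor>) \<ge> y / 2"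
proof -
  assume y: "y \<ge> 1"
  have "real_of_int \<lfloor>y\<rfloor> > y - 1" by linarith
  moreover have "\<lfloor>y\<rfloor> \<ge> 1" using y by linarith
  ultimately show ?thesis by linarith
qed

lemma V1_helpers:
  assumes H: "is_kfactor n k H"
    and far: "\<forall>x\<in>V1. \<forall>y\<in>V1. x \<noteq> y \<longrightarrow> y \<notin> Bl H x"
  shows "\<And>u v w. u \<in> V1 \<Longrightarrow> v \<in> V1 \<Longrightarrow> {u,w} \<in> H \<Longrightarrow> {v,w} \<in> H \<Longrightarrow> u = v"
    and "\<And>u v. u \<in> V1 \<Longrightarrow> v \<in> V1 \<Longrightarrow> {u,v} \<notin> H"
    and "\<And>u v a b. u \<in> V1 \<Longrightarrow> v \<in> V1 \<Longrightarrow> {u,a} \<in> H \<Longrightarrow> {v,b} \<in> H \<Longrightarrow> u \<noteq> v \<Longrightarrow> {a,b} \<notin> H"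
    and "\<And>e a. e \<in> H \<Longrightarrow> e \<noteq> {a}"
proof -
  show nd: "\<And>e a. e \<in> H \<Longrightarrow> e \<noteq> {a}" using H unfolding is_kfactor_def vpairs_def by (auto simp: doubleton_eq_iff)
  show "u = v" if "u \<in> V1" "v \<in> V1" "{u,w} \<in> H" "{v,w} \<in> H" for u v w
  proof (rule ccontr)
    assume "u \<noteq> v"
    moreover have "v \<in> Bl H u" unfolding Bl_def using that(3,4) by (intro CollectI exI[of _ w]) (auto simp: insert_commute)
    ultimately show False using far that by blast
  qed
  show "{u,v} \<notin> H" if "u \<in> V1" "v \<in> V1" for u v
  proof
    assume uv: "{u,v} \<in> H"
    show False
    proof (cases "u = v")
      case True thus False using nd[OF uv, of u] by simp
    next
      case False
      moreover have "v \<in> Bl H u" unfolding Bl_def using uv by blast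
      ultimately show False using far that by blast
    qed
  qed
  show "{a,b} \<notin> H" if "u \<in> V1" "v \<in> V1" "{u,a} \<in> H" "{v,b} \<in> H" "u \<noteq> v" for u v a b
  proof
    assume "{a,b} \<in> H"
    moreover have "{b,v} \<in> H" using that(4) by (simp add: insert_commute)
    ultimately have "v \<in> Bl H u" unfolding Bl_def using that(3) by blast
    thus False using far that by blast
  qed
qed

lemma partII_bound:
  assumes H: "is_kfactor n k H" and k: "k \<ge> 1" and p: "0 < p" "p \<le> 1" and nK: "2 * (k+1)^3 \<le> n"
  shows "other_factor_prob n k p H \<ge> min (real n^2 * p^2 / (4 * real ((k+1)^3)^2)) (1/2) / 2"
proof -
  define K where "K = (k+1)^3"
  have Kpos: "K > 0" unfolding K_def by simp
  obtain V1 where V1: "V1 \<subseteq> {..<n}" "card {..<n} \<le> K * card V1" "\<forall>x\<in>V1. \<forall>y\<in>V1. x \<noteq> y \<longrightarrow> y \<notin> Bl H x"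
  proof -
    have "\<exists>Y\<subseteq>{..<n}. card {..<n} \<le> K * card Y \<and> (\<forall>x\<in>Y. \<forall>y\<in>Y. x \<noteq> y \<longrightarrow> y \<notin> Bl H x)"
    proof (rule greedy)
      show "\<And>x y. y \<in> Bl H x \<Longrightarrow> x \<in> Bl H y" by (rule Bl_sym)
      show "\<And>x. x \<in> Bl H x" unfolding Bl_def by blast
      fix x
      have "card (Bl H x \<inter> {..<n}) \<le> card (Bl H x)" by (rule card_mono) (use Bl_card(2)[OF H] in auto)
      thus "card (Bl H x \<inter> {..<n}) \<le> K" using Bl_card(1)[OF H, of x] unfolding K_def by linarith
    qed simp
    thus ?thesis using that by blast
  qed
  have far: "\<And>x y. x \<in> V1 \<Longrightarrow> y \<in> V1 \<Longrightarrow> x \<noteq> y \<Longrightarrow> y \<notin> Bl H x" using V1(3) by blast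
  note hl = V1_helpers[OF H V1(3)]
  define bs where "bs x = (SOME b. {x,b} \<in> H)" for x
  have bs: "{x, bs x} \<in> H" if "x \<in> V1" for x
  proof -
    have "x < n" using that V1(1) by auto
    hence "card {b. {x,b} \<in> H} = k" by (rule nbr_card(3)[OF H])
    hence "card {b. {x,b} \<in> H} \<noteq> 0" using k by simp
    hence "{b. {x,b} \<in> H} \<noteq> {}" by (metis card.empty)
    hence "\<exists>b. {x,b} \<in> H" by blast
    thus ?thesis unfolding bs_def by (rule someI_ex)
  qed
  define P where "P = {(x,y). x \<in> V1 \<and> y \<in> V1 \<and> x < y}"
  define A where "A q = {{fst q, snd q}, {bs (fst q), bs (snd q)}}" for q
  have finV1: "finite V1" using V1(1) by (rule finite_subset) simp
  have finP: "finite P"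
  proof (rule finite_subset)
    show "P \<subseteq> V1 \<times> V1" unfolding P_def by auto
  qed (use finV1 in simp)
  have Aprop: "A q \<subseteq> vpairs n \<and> card (A q) = 2 \<and>
      (\<forall>S. A q \<subseteq> S \<longrightarrow> (\<exists>H'. is_kfactor n k H' \<and> H' \<noteq> H \<and> H' \<subseteq> S \<union> H))" if q: "q \<in> P" for q
  proof -
    obtain x y where xy: "q = (x,y)" "x \<in> V1" "y \<in> V1" "x < y" using q unfolding P_def by auto
    have e1: "{x, bs x} \<in> H" "{y, bs y} \<in> H" using bs xy by auto
    have n1: "{x,y} \<notin> H" using hl(2) xy by blast
    have n2: "{bs x, bs y} \<notin> H" using hl(3)[OF xy(2,3) e1] xy by simp
    have d1: "x \<noteq> bs x" "y \<noteq> bs y" using hl(4) e1 by fastforce+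
    have d2: "x \<noteq> bs y"
    proof
      assume "x = bs y" hence "{y,x} \<in> H" using e1 by simp
      thus False using hl(2) xy by (simp add: insert_commute)
    qed
    have d3: "bs x \<noteq> y"
    proof
      assume "bs x = y" thus False using e1 hl(2) xy by simp
    qed
    have d4: "bs x \<noteq> bs y"
    proof
      assume "bs x = bs y" thus False using hl(1)[OF xy(2,3) e1(1)] e1 xy by simp
    qed
    have K: "is_kfactor n k ((H - {{x, bs x},{y, bs y}}) \<union> {{x,y},{bs x, bs y}})"
      by (rule switch_kfactor[OF H e1]) (use d1 d2 d3 d4 n1 n2 xy in auto)
    hence sub: "{{x,y},{bs x, bs y}} \<subseteq> vpairs n" unfolding is_kfactor_def by auto
    have "{x,y} \<noteq> {bs x, bs y}" using d1 d2 by (auto simp: doubleton_eq_iff)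
    hence c2: "card (A q) = 2" unfolding A_def xy by simp
    have ex: "\<exists>H'. is_kfactor n k H' \<and> H' \<noteq> H \<and> H' \<subseteq> S \<union> H" if "A q \<subseteq> S" for S
    proof (intro exI conjI)
      show "is_kfactor n k ((H - {{x, bs x},{y, bs y}}) \<union> {{x,y},{bs x, bs y}})" by (rule K)
      show "(H - {{x, bs x},{y, bs y}}) \<union> {{x,y},{bs x, bs y}} \<noteq> H" using n1 by blast
      show "(H - {{x, bs x},{y, bs y}}) \<union> {{x,y},{bs x, bs y}} \<subseteq> S \<union> H" using that unfolding A_def xy by auto
    qed
    show ?thesis using sub c2 ex unfolding A_def xy by auto
  qed
  have Adj: "A q \<inter> A q' = {}" if q: "q \<in> P" "q' \<in> P" "q \<noteq> q'" for q q'
  proof (rule ccontr)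
    assume "A q \<inter> A q' \<noteq> {}"
    obtain x y where xy: "q = (x,y)" "x \<in> V1" "y \<in> V1" "x < y" using q unfolding P_def by auto
    obtain x' y' where xy': "q' = (x',y')" "x' \<in> V1" "y' \<in> V1" "x' < y'" using q unfolding P_def by auto
    have e: "{x, bs x} \<in> H" "{y, bs y} \<in> H" "{x', bs x'} \<in> H" "{y', bs y'} \<in> H" using bs xy xy' by auto
    have nb: "\<And>u v. u \<in> V1 \<Longrightarrow> v \<in> V1 \<Longrightarrow> u \<noteq> bs v"
    proof
      fix u v assume uv: "u \<in> V1" "v \<in> V1" "u = bs v"
      hence "{v,u} \<in> H" using bs by simp
      thus False using hl(2)[OF uv(2,1)] by simp
    qed
    have bb: "\<And>u v. u \<in> V1 \<Longrightarrow> v \<in> V1 \<Longrightarrow> bs u = bs v \<Longrightarrow> u = v"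
      using hl(1) bs by (metis)
    have "{x,y} = {x',y'} \<or> {x,y} = {bs x', bs y'} \<or> {bs x, bs y} = {x', y'} \<or> {bs x, bs y} = {bs x', bs y'}"
      using \<open>A q \<inter> A q' \<noteq> {}\<close> unfolding A_def xy xy' by auto
    thus False
    proof (elim disjE)
      assume "{x,y} = {x',y'}" thus False using xy xy' q(3) by (auto simp: doubleton_eq_iff)
    next
      assume "{x,y} = {bs x', bs y'}" thus False using nb xy xy' by (auto simp: doubleton_eq_iff)
    next
      assume "{bs x, bs y} = {x', y'}" thus False using nb xy xy' by (auto simp: doubleton_eq_iff)
    next
      assume "{bs x, bs y} = {bs x', bs y'}"
      hence "(bs x = bs x' \<and> bs y = bs y') \<or> (bs x = bs y' \<and> bs y = bs x')" by (auto simp: doubleton_eq_iff)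
      thus False
      proof
        assume "bs x = bs x' \<and> bs y = bs y'"
        hence "x = x'" "y = y'" using bb xy xy' by auto
        thus False using xy xy' q(3) by simp
      next
        assume "bs x = bs y' \<and> bs y = bs x'"
        hence "x = y'" "y = x'" using bb xy xy' by auto
        thus False using xy xy' by simp
      qed
    qed
  qed
  define r where "r = card V1"
  have nr: "n \<le> K * r" using V1(2) unfolding r_def by simp
  have r2: "r \<ge> 2"
  proof (rule ccontr)
    assume "\<not> r \<ge> 2" hence "K * r < 2 * K" using Kpos by simp
    moreover have "2 * K \<le> n" using nK unfolding K_def .
    ultimately show False using nr by linarith
  qed
  have cP: "2 * card P + r = r * r"
  proof -
    have "V1 \<times> V1 = P \<union> (prod.swap ` P) \<union> ((\<lambda>x. (x,x)) ` V1)" unfolding P_def by auto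
    moreover have "P \<inter> prod.swap ` P = {}" "(P \<union> prod.swap ` P) \<inter> (\<lambda>x. (x,x)) ` V1 = {}" unfolding P_def by auto
    moreover have "card (prod.swap ` P) = card P" by (rule card_image) (metis inj_on_def swap_swap)
    moreover have "card ((\<lambda>x. (x,x)) ` V1) = r" unfolding r_def by (rule card_image) (simp add: inj_on_def)
    moreover have "finite (prod.swap ` P)" "finite ((\<lambda>x. (x,x)) ` V1)" using finP finV1 by auto
    ultimately have "card (V1 \<times> V1) = card P + card P + r"
      using finP by (simp add: card_Un_disjoint)
    thus ?thesis unfolding r_def by (simp add: card_cartesian_product)
  qed
  have cPr: "real (card P) \<ge> real n ^ 2 / (4 * real K ^ 2)"
  proof -
    have "real r \<ge> 2" using r2 by simp
    have "2 * real (card P) + real r = real r * real r" using cP by (metis of_nat_add of_nat_mult of_nat_numeral)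
    moreover have "real r * real r \<ge> 2 * real r" using \<open>real r \<ge> 2\<close> by (intro mult_right_mono) auto
    ultimately have "real (card P) \<ge> real r ^ 2 / 4" by (simp add: power2_eq_square)
    moreover have "real n \<le> real K * real r" using nr by (metis of_nat_le_iff of_nat_mult)
    hence "real n ^ 2 \<le> (real K * real r) ^ 2" by (intro power_mono) auto
    hence "real n ^ 2 / (4 * real K ^ 2) \<le> real r ^ 2 / 4" using Kpos by (simp add: field_simps power_mult_distrib)
    ultimately show ?thesis by linarith
  qed
  define N where "N = min (card P) (nat \<lfloor>1 / p^2\<rfloor>)"
  obtain I where I: "I \<subseteq> P" "card I = N"
    using obtain_subset_with_card_n[of N P] unfolding N_def by auto
  have finI: "finite I" using I(1) finP by (rule finite_subset)
  have B: "gnp_prob n p (\<lambda>S. \<exists>q\<in>I. A q \<subseteq> S) \<ge> real (card I) * p^2 - (real (card I) * real (card I) - real (card I)) * p^4 / 2"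
  proof (rule bonf[OF finI])
    show "0 \<le> p" "p \<le> 1" using p by auto
    show "\<And>i. i \<in> I \<Longrightarrow> A i \<subseteq> vpairs n \<and> card (A i) = 2" using Aprop I(1) by blast
    show "\<And>i j. i \<in> I \<Longrightarrow> j \<in> I \<Longrightarrow> i \<noteq> j \<Longrightarrow> A i \<inter> A j = {}" using Adj I(1) by blast
  qed
  have G: "other_factor_prob n k p H \<ge> gnp_prob n p (\<lambda>S. \<exists>q\<in>I. A q \<subseteq> S)"
    unfolding other_factor_prob_def
  proof (rule gnp_mono)
    show "0 \<le> p" "p \<le> 1" using p by auto
    fix S assume "\<exists>q\<in>I. A q \<subseteq> S"
    then obtain q where "q \<in> I" "A q \<subseteq> S" by blast
    thus "\<exists>H'. is_kfactor n k H' \<and> H' \<noteq> H \<and> H' \<subseteq> S \<union> H" using Aprop I(1) by blast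
  qed
  define t where "t = real N * p^2"
  have y1: "1 / p^2 \<ge> 1" using p by (simp add: power_le_one)
  have t1: "t \<le> 1"
  proof -
    have "N \<le> nat \<lfloor>1 / p^2\<rfloor>" unfolding N_def by simp
    hence "real N \<le> real (nat \<lfloor>1 / p^2\<rfloor>)" by (simp only: of_nat_le_iff)
    also have "\<dots> \<le> 1 / p^2" using y1 by linarith
    finally show ?thesis unfolding t_def using p by (simp add: field_simps)
  qed
  have t2: "t \<ge> min (real (card P) * p^2) (1/2)"
  proof (cases "card P \<le> nat \<lfloor>1 / p^2\<rfloor>")
    case True thus ?thesis unfolding t_def N_def by simp
  next
    case False
    hence "N = nat \<lfloor>1 / p^2\<rfloor>" unfolding N_def by simp
    hence "t \<ge> (1/p^2)/2 * p^2" unfolding t_def using floor_half[OF y1] by (intro mult_right_mono) auto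
    thus ?thesis using p by simp
  qed
  have X: "real (card I) * p^2 - (real (card I) * real (card I) - real (card I)) * p^4 / 2 \<ge> t - t^2/2"
    unfolding t_def I(2) using p by (simp add: power2_eq_square field_simps) (simp add: power4_eq_xxxx mult_nonneg_nonneg)
  have T: "t - t^2/2 \<ge> t/2"
  proof -
    have "t \<ge> 0" unfolding t_def by simp
    hence "t * (1 - t) \<ge> 0" using t1 by (intro mult_nonneg_nonneg) auto
    thus ?thesis by (simp add: power2_eq_square algebra_simps)
  qed
  have M: "min (real (card P) * p^2) (1/2) \<ge> min (real n^2 * p^2 / (4 * real K^2)) (1/2)"
  proof -
    have "real n^2 * p^2 / (4 * real K^2) = (real n^2 / (4 * real K^2)) * p^2" by simp
    also have "\<dots> \<le> real (card P) * p^2" using cPr by (intro mult_right_mono) auto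
    finally have h: "real n^2 * p^2 / (4 * real K^2) \<le> real (card P) * p^2" .
    show ?thesis using min.mono[OF h order_refl[of "1/2::real"]] .
  qed
  have A1: "min (real n^2 * p^2 / (4 * real K^2)) (1/2) \<le> t" using M t2 by (rule order_trans)
  have "min (real n^2 * p^2 / (4 * real K^2)) (1/2) / 2 \<le> t / 2" using A1 by (rule divide_right_mono) simp
  also have "\<dots> \<le> t - t^2/2" by (rule T)
  also have "\<dots> \<le> real (card I) * p^2 - (real (card I) * real (card I) - real (card I)) * p^4 / 2" by (rule X)
  also have "\<dots> \<le> gnp_prob n p (\<lambda>S. \<exists>q\<in>I. A q \<subseteq> S)" by (rule B)
  also have "\<dots> \<le> other_factor_prob n k p H" by (rule G)
  finally show ?thesis unfolding K_def .
qed

lemma geom_half: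
  assumes "0 \<le> x" "x \<le> 1/2"
  shows "(\<Sum>m=1..M. x^m) \<le> 2 * (x::real)"
proof -
  have "(\<Sum>m=1..M. x^m) \<le> 2*x - 2 * x^(Suc M)"
  proof (induction M)
    case 0 thus ?case by simp
  next
    case (Suc M)
    have "(\<Sum>m=1..Suc M. x^m) = (\<Sum>m=1..M. x^m) + x^(Suc M)" by simp
    also have "\<dots> \<le> 2*x - 2 * x^(Suc M) + x^(Suc M)" using Suc by simp
    also have "\<dots> \<le> 2*x - 2 * x^(Suc (Suc M))"
    proof -
      have "x^(Suc M) * (1 - 2*x) \<ge> 0" using assms by (intro mult_nonneg_nonneg) auto
      thus ?thesis by (simp add: algebra_simps)
    qed
    finally show ?case .
  qed
  moreover have "x^(Suc M) \<ge> 0" using assms by simp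
  ultimately show ?thesis by linarith
qed

theorem mainTheorem2:
  fixes k :: nat and lam :: "nat \<Rightarrow> real"
  assumes "k \<ge> 1"
    and "\<And>n. 0 \<le> lam n \<and> lam n \<le> real n"
  shows "(lam \<longlonglongrightarrow> 0 \<longrightarrow>
            (\<forall>\<epsilon>>0. \<exists>N. \<forall>n\<ge>N. \<forall>H. even (k * n) \<and> is_kfactor n k H \<longrightarrow>
               other_factor_prob n k (lam n / real n) H \<le> \<epsilon>))
       \<and> ((\<exists>c0>0. \<forall>\<^sub>F n in sequentially. lam n \<ge> c0) \<longrightarrow>
            (\<exists>c>0. \<exists>N. \<forall>n\<ge>N. \<forall>H. even (k * n) \<and> is_kfactor n k H \<longrightarrow>
               other_factor_prob n k (lam n / real n) H \<ge> c))"
proof (intro conjI impI allI)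
  have p01: "0 \<le> lam n / real n" "lam n / real n \<le> 1" for n
    using assms(2)[of n] by (auto simp: divide_le_eq_1)
  have kpos: "real k > 0" using assms(1) by simp
  {
    assume lim: "lam \<longlonglongrightarrow> 0"
    fix \<epsilon> :: real assume eps: "\<epsilon> > 0"
    define \<delta> where "\<delta> = min (1 / (2 * real k)) (\<epsilon> / (2 * real k))"
    have dpos: "\<delta> > 0" unfolding \<delta>_def using eps kpos by simp
    have "\<forall>\<^sub>F n in sequentially. dist (lam n) 0 < \<delta>" using lim dpos by (rule tendstoD)
    then obtain N where N: "\<And>n. n \<ge> N \<Longrightarrow> dist (lam n) 0 < \<delta>" unfolding eventually_sequentially by blast
    show "\<exists>N. \<forall>n\<ge>N. \<forall>H. even (k * n) \<and> is_kfactor n k H \<longrightarrow> other_factor_prob n k (lam n / real n) H \<le> \<epsilon>"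
    proof (intro exI allI impI)
      fix n H assume n: "N \<le> n" and H: "even (k * n) \<and> is_kfactor n k H"
      define x where "x = real (n * k) * (lam n / real n)"
      have lt: "lam n < \<delta>" using N[OF n] assms(2)[of n] by simp
      have xk: "x \<le> real k * lam n"
      proof (cases "n = 0")
        case True thus ?thesis unfolding x_def using assms(2)[of n] kpos by simp
      next
        case False thus ?thesis unfolding x_def by simp
      qed
      have x0: "x \<ge> 0" unfolding x_def using p01[of n] by (intro mult_nonneg_nonneg) auto
      have "real k * lam n \<le> real k * \<delta>" using lt kpos by simp
      hence x1: "x \<le> real k * \<delta>" using xk by linarith
      have "real k * \<delta> \<le> 1/2" "real k * \<delta> \<le> \<epsilon>/2"
        unfolding \<delta>_def using kpos by (auto simp: field_simps min_def)
      hence xh: "x \<le> 1/2" "x \<le> \<epsilon>/2" using x1 by linarith+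
      have "other_factor_prob n k (lam n / real n) H \<le> (\<Sum>m=1..card (vpairs n). x^m)"
        unfolding x_def using partI_bound[of n k H] H p01 by blast
      also have "\<dots> \<le> 2 * x" by (rule geom_half[OF x0 xh(1)])
      also have "\<dots> \<le> \<epsilon>" using xh(2) by simp
      finally show "other_factor_prob n k (lam n / real n) H \<le> \<epsilon>" .
    qed
  }
  {
    assume "\<exists>c0>0. \<forall>\<^sub>F n in sequentially. lam n \<ge> c0"
    then obtain c0 N1 where c0: "c0 > 0" and N1: "\<And>n. n \<ge> N1 \<Longrightarrow> lam n \<ge> c0"
      unfolding eventually_sequentially by blast
    define K where "K = (k+1)^3"
    have Kpos: "real K > 0" unfolding K_def by simp
    define c where "c = min (c0^2 / (4 * real K^2)) (1/2) / 2"
    have cpos: "c > 0" unfolding c_def using c0 Kpos by simp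
    show "\<exists>c>0. \<exists>N. \<forall>n\<ge>N. \<forall>H. even (k * n) \<and> is_kfactor n k H \<longrightarrow> other_factor_prob n k (lam n / real n) H \<ge> c"
    proof (intro exI conjI allI impI)
      show "c > 0" by (rule cpos)
      fix n H assume n: "max N1 (2*K) \<le> n" and H: "even (k * n) \<and> is_kfactor n k H"
      have nK: "2 * (k+1)^3 \<le> n" using n unfolding K_def by simp
      hence npos: "n > 0" by (metis gr0I le_zero_eq mult_is_0 power_not_zero zero_neq_numeral add_eq_0_iff_both_eq_0 one_neq_zero)
      have lc: "lam n \<ge> c0" using N1 n by simp
      have ppos: "lam n / real n > 0" using lc c0 npos by simp
      have "other_factor_prob n k (lam n / real n) H \<ge> min (real n^2 * (lam n / real n)^2 / (4 * real ((k+1)^3)^2)) (1/2) / 2"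
        by (rule partII_bound) (use H assms(1) ppos p01 nK in auto)
      moreover have "real n^2 * (lam n / real n)^2 = lam n ^ 2" using npos by (simp add: field_simps)
      moreover have "lam n ^ 2 \<ge> c0 ^ 2" using lc c0 by (intro power_mono) auto
      ultimately have "other_factor_prob n k (lam n / real n) H \<ge> min (c0^2 / (4 * real K^2)) (1/2) / 2"
        unfolding K_def by (smt (verit, best) divide_right_mono of_nat_power zero_le_power2 mult_nonneg_nonneg)
      thus "other_factor_prob n k (lam n / real n) H \<ge> c" unfolding c_def .
    qed
  }
qed

end
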